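(* Let $\mathcal{G}=(\mathcal{V},E)$ be an undirected graph, $\mathcal{V}=\{1,\dots,N\}$, let $X=(X_1,\dots,X_N)$ be a Markov random field on $\mathcal{G}$ with $X_i$ taking values in a finite alphabet $\mathcal{X}_i$, let $g_i:\mathcal{X}_i\to\mathcal{Y}_i$ be functions, and $Y_i=g_i(X_i)$, $Y=(Y_1,\dots,Y_N)$. (i) If $H(Y)=H(X)$, then $H(X_i\mid Y_i,X_{\mathcal{N}_i})=0$ for every $i\in\mathcal{V}$. (ii) If $\mathcal{G}$ is chordal and there exists a permutation $v_1,\dots,v_N$ of $\mathcal{V}$ such that, with $A_{v_i}=\mathcal{N}_{v_i}\cap\{v_1,\dots,v_{i-1}\}$, one has $H(X_{v_i}\mid Y_{v_i},X_{A_{v_i}})=0$ for every $i=1,\dots,N$, then $H(Y)=H(X)$.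
   Context: $\mathcal{N}_i$ is the set of neighbors of $i$ in $\mathcal{G}$; $X_A=(X_j,j\in A)$. $X$ is a Markov random field on $\mathcal{G}$ if for every $i$, $p_{X_i|X_{\mathcal{V}\setminus\{i\}}}=p_{X_i|X_{\mathcal{N}_i}}$. A graph is chordal if every induced cycle has length three. $H$ denotes Shannon (conditional) entropy. No positivity of $p_X$ is assumed. *)

theory Defs
  imports "HOL-Probability.Probability_Mass_Function"
begin

definition undirected_graph :: "nat set \<Rightarrow> (nat \<Rightarrow> nat \<Rightarrow> bool) \<Rightarrow> bool" where
  "undirected_graph V E \<longleftrightarrow>
     (\<forall>i j. E i j \<longrightarrow> E j i) \<and> (\<forall>i. \<not> E i i) \<and> (\<forall>i j. E i j \<longrightarrow> i \<in> V \<and> j \<in> V)"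

definition neighbors :: "nat set \<Rightarrow> (nat \<Rightarrow> nat \<Rightarrow> bool) \<Rightarrow> nat \<Rightarrow> nat set" where
  "neighbors V E i = {j \<in> V. E i j}"

definition induced_cycle :: "nat set \<Rightarrow> (nat \<Rightarrow> nat \<Rightarrow> bool) \<Rightarrow> nat list \<Rightarrow> bool" where
  "induced_cycle V E cs \<longleftrightarrow>
     (let k = length cs in
       k \<ge> 3 \<and> distinct cs \<and> set cs \<subseteq> V \<and>
       (\<forall>j<k. E (cs ! j) (cs ! ((j + 1) mod k))) \<and>
       (\<forall>j<k. \<forall>l<k. E (cs ! j) (cs ! l) \<longrightarrow> l = (j + 1) mod k \<or> j = (l + 1) mod k))"

definition chordal :: "nat set \<Rightarrow> (nat \<Rightarrow> nat \<Rightarrow> bool) \<Rightarrow> bool" where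
  "chordal V E \<longleftrightarrow> (\<forall>cs. induced_cycle V E cs \<longrightarrow> length cs = 3)"

definition entropy_rv :: "'c pmf \<Rightarrow> ('c \<Rightarrow> 'd) \<Rightarrow> real" where
  "entropy_rv p f =
     - (\<Sum>a\<in>set_pmf (map_pmf f p). pmf (map_pmf f p) a * log 2 (pmf (map_pmf f p) a))"

definition cond_entropy_rv :: "'c pmf \<Rightarrow> ('c \<Rightarrow> 'd) \<Rightarrow> ('c \<Rightarrow> 'e) \<Rightarrow> real" where
  "cond_entropy_rv p f h =
     (\<Sum>ab\<in>set_pmf (map_pmf (\<lambda>x. (f x, h x)) p).
        pmf (map_pmf (\<lambda>x. (f x, h x)) p) ab *
        log 2 (pmf (map_pmf h p) (snd ab) / pmf (map_pmf (\<lambda>x. (f x, h x)) p) ab))"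

text \<open>X_A of a configuration x (a function on vertices) is restrict x A.
The probability of the event X_A = x_A.\<close>
definition prob_eq_on :: "(nat \<Rightarrow> 'a) pmf \<Rightarrow> nat set \<Rightarrow> (nat \<Rightarrow> 'a) \<Rightarrow> real" where
  "prob_eq_on p A x = measure_pmf.prob p {y. restrict y A = restrict x A}"

text \<open>Markov random field on (V,E), no positivity assumed: for every vertex i, the
conditional law of X_i given X_{V-{i}} coincides with the conditional law of X_i given
X_{N_i}, wherever the conditioning event X_{V-{i}} = x_{V-{i}} has positive probability.\<close>
definition markov_random_field ::
  "nat set \<Rightarrow> (nat \<Rightarrow> nat \<Rightarrow> bool) \<Rightarrow> (nat \<Rightarrow> 'a) pmf \<Rightarrow> bool" where
  "markov_random_field V E p \<longleftrightarrow>
     (\<forall>i\<in>V. \<forall>x. prob_eq_on p (V - {i}) x > 0 \<longrightarrow>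
        prob_eq_on p (insert i (V - {i})) x / prob_eq_on p (V - {i}) x =
        prob_eq_on p (insert i (neighbors V E i)) x / prob_eq_on p (neighbors V E i) x)"

end

theory Submission imports Defs begin

lemma log2_0: "(r::real) > 0 \<Longrightarrow> log 2 r = 0 \<Longrightarrow> r = 1"
  using inj_onD[OF log_inj[of 2], of r 1] by simp

lemma pmf_pair_le:
  "pmf (map_pmf (\<lambda>x. (f x, h x)) p) (a,b) \<le> pmf (map_pmf h p) b"
  unfolding pmf_map by (rule measure_pmf.finite_measure_mono) auto

lemma pmf_pair_split:
  "pmf (map_pmf h p) b = pmf (map_pmf (\<lambda>x. (f x, h x)) p) (a,b)
     + measure_pmf.prob p {x. h x = b \<and> f x \<noteq> a}"
proof -
  have "h -` {b} = ((\<lambda>x. (f x, h x)) -` {(a,b)}) \<union> {x. h x = b \<and> f x \<noteq> a}" by auto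
  moreover have "((\<lambda>x. (f x, h x)) -` {(a,b)}) \<inter> {x. h x = b \<and> f x \<noteq> a} = {}" by auto
  ultimately show ?thesis unfolding pmf_map
    by (simp add: measure_pmf.finite_measure_Union)
qed

lemma cond0:
  assumes "\<forall>x\<in>set_pmf p. \<forall>y\<in>set_pmf p. h x = h y \<longrightarrow> f x = f y"
  shows "cond_entropy_rv p f h = 0"
  unfolding cond_entropy_rv_def
proof (rule sum.neutral, rule ballI)
  fix ab assume ab: "ab \<in> set_pmf (map_pmf (\<lambda>x. (f x, h x)) p)"
  obtain a b where abd: "ab = (a,b)" by force
  have "ab \<in> (\<lambda>x. (f x, h x)) ` set_pmf p" using ab by simp
  then obtain x where x: "x \<in> set_pmf p" "f x = a" "h x = b" unfolding abd by blast
  have "set_pmf p \<inter> {x. h x = b \<and> f x \<noteq> a} = {}"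
  proof (rule ccontr)
    assume "set_pmf p \<inter> {x. h x = b \<and> f x \<noteq> a} \<noteq> {}"
    then obtain y where y: "y \<in> set_pmf p" "h y = b" "f y \<noteq> a" by blast
    have "h x = h y \<longrightarrow> f x = f y" using assms x(1) y(1) by blast
    thus False using x y by simp
  qed
  hence "measure_pmf.prob p {x. h x = b \<and> f x \<noteq> a} = 0"
    unfolding measure_pmf_zero_iff .
  hence eq: "pmf (map_pmf h p) b = pmf (map_pmf (\<lambda>x. (f x, h x)) p) (a,b)"
    using pmf_pair_split[of h p b f a] by linarith
  have pos: "pmf (map_pmf (\<lambda>x. (f x, h x)) p) (a,b) > 0"
    using ab unfolding abd by (rule pmf_positive)
  have "pmf (map_pmf h p) b / pmf (map_pmf (\<lambda>x. (f x, h x)) p) (a,b) = 1"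
    using eq pos by simp
  thus "pmf (map_pmf (\<lambda>x. (f x, h x)) p) ab *
        log 2 (pmf (map_pmf h p) (snd ab) / pmf (map_pmf (\<lambda>x. (f x, h x)) p) ab) = 0"
    unfolding abd snd_conv by simp
qed

lemma det:
  assumes fin: "finite (set_pmf (map_pmf (\<lambda>x. (f x, h x)) p))"
    and z: "cond_entropy_rv p f h = 0"
  shows "\<forall>x\<in>set_pmf p. \<forall>y\<in>set_pmf p. h x = h y \<longrightarrow> f x = f y"
proof (intro ballI impI, rule ccontr)
  fix x y assume x: "x \<in> set_pmf p" and y: "y \<in> set_pmf p" and hxy: "h x = h y" and ne: "f x \<noteq> f y"
  let ?Q = "map_pmf (\<lambda>x. (f x, h x)) p"
  let ?t = "\<lambda>ab. pmf ?Q ab * log 2 (pmf (map_pmf h p) (snd ab) / pmf ?Q ab)"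
  have nn: "\<forall>ab\<in>set_pmf ?Q. ?t ab \<ge> 0"
  proof
    fix ab assume ab: "ab \<in> set_pmf ?Q"
    obtain a b where abd: "ab = (a,b)" by force
    have pos: "pmf ?Q ab > 0" using ab by (simp add: pmf_positive)
    have "pmf ?Q ab \<le> pmf (map_pmf h p) (snd ab)" using pmf_pair_le abd by simp
    hence "pmf (map_pmf h p) (snd ab) / pmf ?Q ab \<ge> 1" using pos by simp
    hence "log 2 (pmf (map_pmf h p) (snd ab) / pmf ?Q ab) \<ge> 0" by simp
    thus "?t ab \<ge> 0" using pos by simp
  qed
  have "sum ?t (set_pmf ?Q) = 0" using z unfolding cond_entropy_rv_def .
  moreover have "sum ?t (set_pmf ?Q) = 0 \<longleftrightarrow> (\<forall>ab\<in>set_pmf ?Q. ?t ab = 0)"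
    by (rule sum_nonneg_eq_0_iff[OF fin]) (use nn in blast)
  ultimately have all0: "\<forall>ab\<in>set_pmf ?Q. ?t ab = 0" by blast
  have xin: "(f x, h x) \<in> set_pmf ?Q" using x by simp
  have pos: "pmf ?Q (f x, h x) > 0" using xin by (simp add: pmf_positive)
  have "log 2 (pmf (map_pmf h p) (h x) / pmf ?Q (f x, h x)) = 0" using all0 xin pos by auto
  moreover have "pmf (map_pmf h p) (h x) / pmf ?Q (f x, h x) > 0"
    using pos pmf_pair_le[of f h p "f x" "h x"] by simp
  ultimately have "pmf (map_pmf h p) (h x) / pmf ?Q (f x, h x) = 1" by (rule log2_0[rotated])
  hence eq: "pmf (map_pmf h p) (h x) = pmf ?Q (f x, h x)" using pos by simp
  have "measure_pmf.prob p {z. h z = h x \<and> f z \<noteq> f x} > 0"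
    using y hxy ne by (intro measure_pmf_posI) auto
  thus False using pmf_pair_split[of h p "h x" f "f x"] eq by simp
qed

lemma pmf_map_fin:
  assumes fin: "finite (set_pmf q)"
  shows "pmf (map_pmf G q) y = sum (pmf q) {x \<in> set_pmf q. G x = y}"
proof -
  have "pmf (map_pmf G q) y = measure_pmf.prob q (G -` {y} \<inter> set_pmf q)"
    unfolding pmf_map measure_Int_set_pmf ..
  also have "G -` {y} \<inter> set_pmf q = {x \<in> set_pmf q. G x = y}" by auto
  also have "measure_pmf.prob q {x \<in> set_pmf q. G x = y} = sum (pmf q) {x \<in> set_pmf q. G x = y}"
    using fin by (intro measure_measure_pmf_finite) auto
  finally show ?thesis .
qed

lemma HY_sum:
  assumes fin: "finite (set_pmf q)"
  shows "(\<Sum>y\<in>set_pmf (map_pmf G q). pmf (map_pmf G q) y * log 2 (pmf (map_pmf G q) y))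
       = (\<Sum>x\<in>set_pmf q. pmf q x * log 2 (pmf (map_pmf G q) (G x)))"
proof -
  let ?h = "\<lambda>x. pmf q x * log 2 (pmf (map_pmf G q) (G x))"
  have "(\<Sum>x\<in>set_pmf q. ?h x) = (\<Sum>y\<in>G ` set_pmf q. \<Sum>x\<in>{x \<in> set_pmf q. G x = y}. ?h x)"
    by (rule sum.image_gen[OF fin])
  also have "\<dots> = (\<Sum>y\<in>G ` set_pmf q. pmf (map_pmf G q) y * log 2 (pmf (map_pmf G q) y))"
  proof (rule sum.cong[OF refl])
    fix y assume "y \<in> G ` set_pmf q"
    have "(\<Sum>x\<in>{x \<in> set_pmf q. G x = y}. ?h x) =
       (\<Sum>x\<in>{x \<in> set_pmf q. G x = y}. pmf q x * log 2 (pmf (map_pmf G q) y))"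
      by (rule sum.cong) auto
    also have "\<dots> = pmf (map_pmf G q) y * log 2 (pmf (map_pmf G q) y)"
      unfolding pmf_map_fin[OF fin, of G y] by (simp add: sum_distrib_right)
    finally show "(\<Sum>x\<in>{x \<in> set_pmf q. G x = y}. ?h x) = pmf (map_pmf G q) y * log 2 (pmf (map_pmf G q) y)" .
  qed
  finally show ?thesis by simp
qed

lemma pmf_map_ge: "pmf q x \<le> pmf (map_pmf G q) (G x)"
  unfolding pmf_map measure_pmf_single[of q x, symmetric]
  by (rule measure_pmf.finite_measure_mono) auto

lemma ent_diff:
  assumes fin: "finite (set_pmf q)"
  shows "entropy_rv q (\<lambda>x. x) - entropy_rv q G =
     (\<Sum>x\<in>set_pmf q. pmf q x * (log 2 (pmf (map_pmf G q) (G x)) - log 2 (pmf q x)))"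
  unfolding entropy_rv_def HY_sum[OF fin] map_pmf_ident
  by (simp add: sum_subtractf right_diff_distrib)

lemma ent_inj:
  assumes fin: "finite (set_pmf q)"
  shows "entropy_rv q G = entropy_rv q (\<lambda>x. x) \<longleftrightarrow> inj_on G (set_pmf q)"
proof
  let ?t = "\<lambda>x. pmf q x * (log 2 (pmf (map_pmf G q) (G x)) - log 2 (pmf q x))"
  assume eq: "entropy_rv q G = entropy_rv q (\<lambda>x. x)"
  have nn: "\<forall>x\<in>set_pmf q. ?t x \<ge> 0"
  proof
    fix x assume x: "x \<in> set_pmf q"
    have pos: "pmf q x > 0" using x by (simp add: pmf_positive)
    hence "log 2 (pmf q x) \<le> log 2 (pmf (map_pmf G q) (G x))"
      using pmf_map_ge[of q x G] by simp
    thus "?t x \<ge> 0" using pos by simp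
  qed
  have "sum ?t (set_pmf q) = 0" using ent_diff[OF fin, of G] eq by simp
  moreover have "sum ?t (set_pmf q) = 0 \<longleftrightarrow> (\<forall>x\<in>set_pmf q. ?t x = 0)"
    by (rule sum_nonneg_eq_0_iff[OF fin]) (use nn in blast)
  ultimately have all0: "\<forall>x\<in>set_pmf q. ?t x = 0" by blast
  have same: "pmf (map_pmf G q) (G x) = pmf q x" if x: "x \<in> set_pmf q" for x
  proof -
    have pos: "pmf q x > 0" using x by (simp add: pmf_positive)
    have "log 2 (pmf (map_pmf G q) (G x)) = log 2 (pmf q x)" using all0 x pos by auto
    moreover have "pmf (map_pmf G q) (G x) > 0" using pos pmf_map_ge[of q x G] by simp
    ultimately show ?thesis using inj_onD[OF log_inj[of 2]] pos by simp
  qed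
  show "inj_on G (set_pmf q)"
  proof (rule inj_onI, rule ccontr)
    fix x y assume x: "x \<in> set_pmf q" and y: "y \<in> set_pmf q" and G: "G x = G y" and ne: "x \<noteq> y"
    have "pmf (map_pmf G q) (G x) \<ge> measure_pmf.prob q {x, y}"
      unfolding pmf_map using G by (intro measure_pmf.finite_measure_mono) auto
    also have "measure_pmf.prob q {x, y} = pmf q x + pmf q y"
      using ne by (simp add: measure_measure_pmf_finite)
    finally show False using same[OF x] y by (simp add: set_pmf_iff)
  qed
next
  assume inj: "inj_on G (set_pmf q)"
  have same: "pmf (map_pmf G q) (G x) = pmf q x" if x: "x \<in> set_pmf q" for x
  proof -
    have "pmf (map_pmf G q) (G x) = measure_pmf.prob q (G -` {G x} \<inter> set_pmf q)"
      unfolding pmf_map measure_Int_set_pmf ..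
    also have "G -` {G x} \<inter> set_pmf q = {x}" using inj x by (auto dest: inj_onD)
    finally show ?thesis by (simp add: measure_pmf_single)
  qed
  have "entropy_rv q (\<lambda>x. x) - entropy_rv q G = 0"
    unfolding ent_diff[OF fin] by (rule sum.neutral) (simp add: same)
  thus "entropy_rv q G = entropy_rv q (\<lambda>x. x)" by simp
qed

theorem proposition4:
  fixes N :: nat
    and E :: "nat \<Rightarrow> nat \<Rightarrow> bool"
    and p :: "(nat \<Rightarrow> 'a) pmf"
    and \<X> :: "nat \<Rightarrow> 'a set"
    and g :: "nat \<Rightarrow> 'a \<Rightarrow> 'b"
  assumes graph: "undirected_graph {1..N} E"
    and alph_fin: "\<forall>i\<in>{1..N}. finite (\<X> i)"
    and alph: "\<forall>x\<in>set_pmf p. \<forall>i\<in>{1..N}. x i \<in> \<X> i"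
    and mrf: "markov_random_field {1..N} E p"
  shows
    "(entropy_rv p (\<lambda>x. \<lambda>i\<in>{1..N}. g i (x i)) = entropy_rv p (\<lambda>x. restrict x {1..N})
        \<longrightarrow> (\<forall>i\<in>{1..N}. cond_entropy_rv p (\<lambda>x. x i)
                (\<lambda>x. (g i (x i), restrict x (neighbors {1..N} E i))) = 0))
     \<and>
     ((chordal {1..N} E \<and>
       (\<exists>v. bij_betw v {1..N} {1..N} \<and>
          (\<forall>i\<in>{1..N}. cond_entropy_rv p (\<lambda>x. x (v i))
              (\<lambda>x. (g (v i) (x (v i)),
                    restrict x (neighbors {1..N} E (v i) \<inter> v ` {1..<i}))) = 0)))
        \<longrightarrow> entropy_rv p (\<lambda>x. \<lambda>i\<in>{1..N}. g i (x i)) = entropy_rv p (\<lambda>x. restrict x {1..N}))"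
proof -
  define V where "V = {1..N::nat}"
  define R where "R = (\<lambda>x::nat \<Rightarrow> 'a. restrict x V)"
  define G where "G = (\<lambda>r::nat \<Rightarrow> 'a. \<lambda>i\<in>V. g i (r i))"
  define q where "q = map_pmf R p"
  have finV: "finite V" unfolding V_def by simp
  have setq: "set_pmf q = R ` set_pmf p" unfolding q_def by simp
  have "R ` set_pmf p \<subseteq> PiE V \<X>"
    using alph unfolding R_def V_def by auto
  moreover have "finite (PiE V \<X>)" using finV alph_fin unfolding V_def by (intro finite_PiE) auto
  ultimately have finR: "finite (R ` set_pmf p)" by (rule finite_subset)
  have finq: "finite (set_pmf q)" using finR setq by simp
  have finK: "finite (set_pmf (map_pmf K p))" if "\<And>x. K x = K' (R x)" for K :: "(nat \<Rightarrow> 'a) \<Rightarrow> 'c" and K'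
  proof -
    have "set_pmf (map_pmf K p) = K' ` (R ` set_pmf p)" using that by (auto simp: image_image)
    thus ?thesis using finR by simp
  qed
  have GR: "(\<lambda>x. \<lambda>i\<in>{1..N}. g i (x i)) = (\<lambda>x. G (R x))"
    unfolding G_def R_def V_def by (auto intro!: restrict_ext)
  have e1: "entropy_rv p (\<lambda>x. G (R x)) = entropy_rv q G"
    unfolding entropy_rv_def q_def map_pmf_comp ..
  have e2: "entropy_rv p (\<lambda>x. restrict x {1..N}) = entropy_rv q (\<lambda>x. x)"
    unfolding entropy_rv_def q_def map_pmf_comp R_def V_def by simp
  have Heq: "entropy_rv p (\<lambda>x. \<lambda>i\<in>{1..N}. g i (x i)) = entropy_rv p (\<lambda>x. restrict x {1..N})
     \<longleftrightarrow> inj_on G (R ` set_pmf p)"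
    unfolding GR e1 e2 ent_inj[OF finq] setq ..
  have GReq: "G (R x) = G (R y) \<longleftrightarrow> (\<forall>j\<in>V. g j (x j) = g j (y j))" for x y
    unfolding G_def R_def by (auto simp: fun_eq_iff restrict_def)
  have Req: "R x = R y \<longleftrightarrow> (\<forall>j\<in>V. x j = y j)" for x y
    unfolding R_def by (auto simp: fun_eq_iff restrict_def)
  have injI: "inj_on G (R ` set_pmf p) \<longleftrightarrow>
     (\<forall>x\<in>set_pmf p. \<forall>y\<in>set_pmf p. (\<forall>j\<in>V. g j (x j) = g j (y j)) \<longrightarrow> (\<forall>j\<in>V. x j = y j))"
  proof -
    have "inj_on G (R ` set_pmf p) \<longleftrightarrow>
       (\<forall>x\<in>set_pmf p. \<forall>y\<in>set_pmf p. G (R x) = G (R y) \<longrightarrow> R x = R y)"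
      unfolding inj_on_def by blast
    thus ?thesis by (simp only: GReq Req)
  qed
  have part1: "\<forall>i\<in>{1..N}. cond_entropy_rv p (\<lambda>x. x i)
                (\<lambda>x. (g i (x i), restrict x (neighbors {1..N} E i))) = 0"
    if inj: "inj_on G (R ` set_pmf p)"
  proof
    fix i assume iV': "i \<in> {1..N}"
    hence iV: "i \<in> V" unfolding V_def .
    have key: "\<And>x y. x \<in> set_pmf p \<Longrightarrow> y \<in> set_pmf p \<Longrightarrow> (\<forall>j\<in>V. g j (x j) = g j (y j)) \<Longrightarrow> (\<forall>j\<in>V. x j = y j)"
    proof -
      fix x y assume x: "x \<in> set_pmf p" and y: "y \<in> set_pmf p" and gg: "\<forall>j\<in>V. g j (x j) = g j (y j)"
      have k0: "\<forall>x\<in>set_pmf p. \<forall>y\<in>set_pmf p. (\<forall>j\<in>V. g j (x j) = g j (y j)) \<longrightarrow> (\<forall>j\<in>V. x j = y j)"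
        using inj unfolding injI .
      show "\<forall>j\<in>V. x j = y j" using bspec[OF bspec[OF k0 x] y] gg by (rule mp)
    qed
    define Ni where "Ni = neighbors V E i"
    have iNi: "i \<notin> Ni" using graph unfolding Ni_def neighbors_def undirected_graph_def by auto
    show "cond_entropy_rv p (\<lambda>x. x i) (\<lambda>x. (g i (x i), restrict x (neighbors {1..N} E i))) = 0"
    proof (rule cond0, intro ballI impI, rule ccontr)
      fix x y assume x: "x \<in> set_pmf p" and y: "y \<in> set_pmf p"
        and h: "(g i (x i), restrict x (neighbors {1..N} E i)) = (g i (y i), restrict y (neighbors {1..N} E i))"
        and ne: "x i \<noteq> y i"
      have gi: "g i (x i) = g i (y i)" using h by simp
      have xyN: "\<forall>j\<in>Ni. x j = y j"
      proof
        fix j assume j: "j \<in> Ni"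
        have "restrict x Ni j = restrict y Ni j" using h unfolding Ni_def V_def by simp
        thus "x j = y j" using j by simp
      qed
      define z where "z = x(i := y i)"
      have P1: "prob_eq_on p (V - {i}) z > 0"
        unfolding prob_eq_on_def by (rule measure_pmf_posI[OF x]) (auto simp: z_def fun_eq_iff restrict_def)
      have P2: "prob_eq_on p (insert i Ni) z > 0"
        unfolding prob_eq_on_def by (rule measure_pmf_posI[OF y]) (use xyN iNi in \<open>auto simp: z_def fun_eq_iff restrict_def\<close>)
      have P3: "prob_eq_on p Ni z > 0"
        unfolding prob_eq_on_def by (rule measure_pmf_posI[OF y]) (use xyN iNi in \<open>auto simp: z_def fun_eq_iff restrict_def\<close>)
      have "prob_eq_on p (insert i (V - {i})) z / prob_eq_on p (V - {i}) z =
            prob_eq_on p (insert i Ni) z / prob_eq_on p Ni z"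
      proof -
        have m: "\<forall>i\<in>V. \<forall>x. prob_eq_on p (V - {i}) x > 0 \<longrightarrow>
          prob_eq_on p (insert i (V - {i})) x / prob_eq_on p (V - {i}) x =
          prob_eq_on p (insert i (neighbors V E i)) x / prob_eq_on p (neighbors V E i) x"
          using mrf unfolding markov_random_field_def V_def .
        show ?thesis using mp[OF spec[OF bspec[OF m iV], of z] P1] unfolding Ni_def .
      qed
      also have "\<dots> > 0" using P2 P3 by simp
      finally have "prob_eq_on p (insert i (V - {i})) z \<noteq> 0" by auto
      moreover have "insert i (V - {i}) = V" using iV by auto
      ultimately have "measure_pmf.prob p {w. restrict w V = restrict z V} \<noteq> 0"
        unfolding prob_eq_on_def by simp
      then obtain w where w: "w \<in> set_pmf p" "restrict w V = restrict z V"
        unfolding measure_pmf_zero_iff by blast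
      have wz: "\<forall>j\<in>V. w j = z j"
      proof
        fix j assume j: "j \<in> V"
        have "restrict w V j = restrict z V j" using w(2) by simp
        thus "w j = z j" using j by simp
      qed
      have "\<forall>j\<in>V. g j (w j) = g j (x j)" using wz gi by (auto simp: z_def)
      hence "\<forall>j\<in>V. w j = x j" using key[OF w(1) x] by blast
      thus False using wz iV ne by (auto simp: z_def)
    qed
  qed
  have part2: "inj_on G (R ` set_pmf p)"
    if v: "bij_betw v {1..N} {1..N}" and c: "\<forall>i\<in>{1..N}. cond_entropy_rv p (\<lambda>x. x (v i))
              (\<lambda>x. (g (v i) (x (v i)),
                    restrict x (neighbors {1..N} E (v i) \<inter> v ` {1..<i}))) = 0" for v
  proof -
    have vV: "v ` V = V" using v unfolding V_def bij_betw_def by simp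
    have D: "\<forall>x\<in>set_pmf p. \<forall>y\<in>set_pmf p.
        (g (v i) (x (v i)), restrict x (neighbors {1..N} E (v i) \<inter> v ` {1..<i})) =
        (g (v i) (y (v i)), restrict y (neighbors {1..N} E (v i) \<inter> v ` {1..<i})) \<longrightarrow> x (v i) = y (v i)"
      if i: "i \<in> {1..N}" for i
    proof (rule det)
      have viV: "v i \<in> V" using vV i unfolding V_def by auto
      let ?S = "neighbors {1..N} E (v i) \<inter> v ` {1..<i}"
      have SV: "?S \<subseteq> V" unfolding neighbors_def V_def by auto
      show "finite (set_pmf (map_pmf (\<lambda>x. (x (v i), g (v i) (x (v i)), restrict x ?S)) p))"
      proof (rule finK)
        fix x
        show "(x (v i), g (v i) (x (v i)), restrict x ?S) =
          (\<lambda>r. (r (v i), g (v i) (r (v i)), restrict r ?S)) (R x)"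
          using viV SV unfolding R_def by (auto simp: fun_eq_iff restrict_def)
      qed
      show "cond_entropy_rv p (\<lambda>x. x (v i)) (\<lambda>x. (g (v i) (x (v i)), restrict x ?S)) = 0"
        using bspec[OF c i] .
    qed
    show ?thesis unfolding injI
    proof (rule ballI, rule ballI, rule impI)
      fix x y assume x: "x \<in> set_pmf p" and y: "y \<in> set_pmf p" and gg: "\<forall>j\<in>V. g j (x j) = g j (y j)"
      have all: "i \<in> {1..N} \<longrightarrow> x (v i) = y (v i)" for i
      proof (induction i rule: less_induct)
        case (less i)
        show ?case
        proof
          assume i: "i \<in> {1..N}"
          have viV: "v i \<in> V" using vV i unfolding V_def by auto
          have "\<forall>j \<in> v ` {1..<i}. x j = y j"
          proof
            fix j assume "j \<in> v ` {1..<i}"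
            then obtain k where k: "k \<in> {1..<i}" "j = v k" by blast
            have "k \<in> {1..N}" using k i by auto
            thus "x j = y j" using less k by auto
          qed
          hence "restrict x (neighbors {1..N} E (v i) \<inter> v ` {1..<i}) =
                 restrict y (neighbors {1..N} E (v i) \<inter> v ` {1..<i})"
            by (auto simp: fun_eq_iff restrict_def)
          moreover have "g (v i) (x (v i)) = g (v i) (y (v i))" using gg viV by blast
          ultimately show "x (v i) = y (v i)" using D[OF i] x y by simp
        qed
      qed
      show "\<forall>j\<in>V. x j = y j"
      proof
        fix j assume "j \<in> V"
        then obtain i where "i \<in> V" "j = v i" using vV by force
        thus "x j = y j" using all unfolding V_def by blast
      qed
    qed
  qed
  show ?thesis
  proof (rule conjI; rule impI)
    assume "entropy_rv p (\<lambda>x. \<lambda>i\<in>{1..N}. g i (x i)) = entropy_rv p (\<lambda>x. restrict x {1..N})"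
    hence "inj_on G (R ` set_pmf p)" by (rule iffD1[OF Heq])
    thus "\<forall>i\<in>{1..N}. cond_entropy_rv p (\<lambda>x. x i)
                (\<lambda>x. (g i (x i), restrict x (neighbors {1..N} E i))) = 0" by (rule part1)
  next
    assume "chordal {1..N} E \<and>
       (\<exists>v. bij_betw v {1..N} {1..N} \<and>
          (\<forall>i\<in>{1..N}. cond_entropy_rv p (\<lambda>x. x (v i))
              (\<lambda>x. (g (v i) (x (v i)),
                    restrict x (neighbors {1..N} E (v i) \<inter> v ` {1..<i}))) = 0))"
    then obtain v where "bij_betw v {1..N} {1..N}" and "\<forall>i\<in>{1..N}. cond_entropy_rv p (\<lambda>x. x (v i))
              (\<lambda>x. (g (v i) (x (v i)),
                    restrict x (neighbors {1..N} E (v i) \<inter> v ` {1..<i}))) = 0" by (elim conjE exE)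
    hence "inj_on G (R ` set_pmf p)" by (rule part2)
    thus "entropy_rv p (\<lambda>x. \<lambda>i\<in>{1..N}. g i (x i)) = entropy_rv p (\<lambda>x. restrict x {1..N})"
      by (rule iffD2[OF Heq])
  qed
qed

end
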